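(* Let $X=\{x_j:j\in J\}\subset\mathbb{R}^2$ be finite with $n=|J|$, and suppose its $1$-centre $C$ is equidistant from all points of $X$. Then $C$ is the quadratic min-power centre of $X$ if and only if $C\in\mathrm{conv}(\mathcal{M})$.
   Context: The quadratic min-power centre is the unique minimiser of $P(s)=\sum_{i\in J}\|s-x_i\|^2+\max_{i\in J}\|s-x_i\|^2$. $C$ is the centre of the minimum enclosing circle of $X$. $\mathcal{M}=\{M_j:j\in J\}$ with $M_j=\frac{1}{n+1}\big(x_j+\sum_{i\in J}x_i\big)$. *)

theory Defs
  imports "HOL-Analysis.Analysis"
begin

definition max_sqdist :: "('j \<Rightarrow> real^2) \<Rightarrow> 'j set \<Rightarrow> real^2 \<Rightarrow> real" where
  "max_sqdist x J s = (MAX i\<in>J. (norm (s - x i))\<^sup>2)"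

definition qpower :: "('j \<Rightarrow> real^2) \<Rightarrow> 'j set \<Rightarrow> real^2 \<Rightarrow> real" where
  "qpower x J s = (\<Sum>i\<in>J. (norm (s - x i))\<^sup>2) + max_sqdist x J s"

definition is_qmin_power_centre :: "('j \<Rightarrow> real^2) \<Rightarrow> 'j set \<Rightarrow> real^2 \<Rightarrow> bool" where
  "is_qmin_power_centre x J c \<longleftrightarrow> (\<forall>s. qpower x J c \<le> qpower x J s)"

definition is_one_centre :: "('j \<Rightarrow> real^2) \<Rightarrow> 'j set \<Rightarrow> real^2 \<Rightarrow> bool" where
  "is_one_centre x J c \<longleftrightarrow> (\<forall>s. (MAX i\<in>J. dist c (x i)) \<le> (MAX i\<in>J. dist s (x i)))"

definition Mpt :: "('j \<Rightarrow> real^2) \<Rightarrow> 'j set \<Rightarrow> 'j \<Rightarrow> real^2" where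
  "Mpt x J j = (1 / (real (card J) + 1)) *\<^sub>R (x j + (\<Sum>i\<in>J. x i))"

end

theory Submission
  imports Defs
begin

lemma sq_expand:
  fixes s C y :: "real^2"
  shows "(norm (s - y))\<^sup>2 = (norm (s - C))\<^sup>2 + 2 * inner (s - C) (C - y) + (norm (C - y))\<^sup>2"
proof -
  have "s - y = (s - C) + (C - y)" by simp
  then have "(norm (s - y))\<^sup>2 = (norm ((s - C) + (C - y)))\<^sup>2" by simp
  also have "\<dots> = (norm (s - C))\<^sup>2 + 2 * inner (s - C) (C - y) + (norm (C - y))\<^sup>2"
    using dot_norm[of "s - C" "C - y"] by simp
  finally show ?thesis .
qed

theorem proposition3:
  fixes x :: "'j \<Rightarrow> real^2" and J :: "'j set" and C :: "real^2"
  assumes "finite J" and "J \<noteq> {}" and "inj_on x J"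
    and "is_one_centre x J C"
    and "\<forall>i\<in>J. \<forall>k\<in>J. dist C (x i) = dist C (x k)"
  shows "is_qmin_power_centre x J C \<longleftrightarrow> C \<in> convex hull (Mpt x J ` J)"
proof -
  note fin = assms(1) and ne = assms(2)
  obtain i0 where i0: "i0 \<in> J" using ne by blast
  define r2 where "r2 = (norm (C - x i0))\<^sup>2"
  have r2: "(norm (C - x i))\<^sup>2 = r2" if "i \<in> J" for i
  proof -
    have "dist C (x i) = dist C (x i0)" using assms(5) that i0 by blast
    then show ?thesis unfolding r2_def by (simp add: dist_norm)
  qed
  define n where "n = real (card J)"
  define S where "S = (\<Sum>i\<in>J. x i)"
  have npos: "n > 0" using fin ne unfolding n_def by (simp add: card_gt_0_iff)
  have Mdef: "Mpt x J j = (1 / (n + 1)) *\<^sub>R (x j + S)" for j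
    unfolding Mpt_def n_def S_def by simp
  have maxC: "max_sqdist x J C = r2"
  proof -
    have "(\<lambda>i. (norm (C - x i))\<^sup>2) ` J = {r2}" using r2 ne by auto
    then show ?thesis unfolding max_sqdist_def by simp
  qed
  have sumC: "(\<Sum>i\<in>J. (norm (C - x i))\<^sup>2) = n * r2"
    using r2 unfolding n_def by simp
  have PC: "qpower x J C = (n + 1) * r2"
    unfolding qpower_def using maxC sumC by (simp add: algebra_simps)
  have sum_exp: "(\<Sum>i\<in>J. (norm (s - x i))\<^sup>2)
      = n * (norm (s - C))\<^sup>2 + 2 * inner (s - C) (n *\<^sub>R C - S) + n * r2" for s
  proof -
    have "(\<Sum>i\<in>J. (norm (s - x i))\<^sup>2)
       = (\<Sum>i\<in>J. (norm (s - C))\<^sup>2 + 2 * inner (s - C) (C - x i) + r2)"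
    proof (rule sum.cong)
      fix i assume "i \<in> J"
      show "(norm (s - x i))\<^sup>2 = (norm (s - C))\<^sup>2 + 2 * inner (s - C) (C - x i) + r2"
        using sq_expand[of s "x i" C] r2[OF \<open>i \<in> J\<close>] by simp
    qed simp
    also have "\<dots> = n * (norm (s - C))\<^sup>2 + 2 * (\<Sum>i\<in>J. inner (s - C) (C - x i)) + n * r2"
      unfolding n_def by (simp add: sum.distrib sum_distrib_left)
    also have "(\<Sum>i\<in>J. inner (s - C) (C - x i)) = inner (s - C) (\<Sum>i\<in>J. C - x i)"
      by (simp add: inner_sum_right)
    also have "(\<Sum>i\<in>J. C - x i) = n *\<^sub>R C - S"
      unfolding S_def n_def by (simp add: sum_subtractf scaleR_conv_of_real)
    finally show ?thesis .
  qed
  show ?thesis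
  proof
    assume qm: "is_qmin_power_centre x J C"
    show "C \<in> convex hull (Mpt x J ` J)"
    proof (rule ccontr)
      assume notin: "C \<notin> convex hull (Mpt x J ` J)"
      have "compact (convex hull (Mpt x J ` J))"
        by (rule compact_convex_hull) (use fin in \<open>simp add: finite_imp_compact\<close>)
      then have "closed (convex hull (Mpt x J ` J))" by (rule compact_imp_closed)
      then obtain v b where vb: "inner v C < b" and
        hb: "\<forall>y\<in>convex hull (Mpt x J ` J). inner v y > b"
        using separating_hyperplane_closed_point[OF convex_convex_hull _ notin] by blast
      define d where "d = b - inner v C"
      have dpos: "d > 0" using vb unfolding d_def by simp
      have vx: "inner v (x j) > (n + 1) * b - inner v S" if "j \<in> J" for j
      proof -
        have "Mpt x J j \<in> convex hull (Mpt x J ` J)"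
          using that by (simp add: hull_inc)
        then have "inner v (Mpt x J j) > b" using hb by blast
        then have "(inner v (x j) + inner v S) / (n + 1) > b"
          unfolding Mdef by (simp add: inner_add_right)
        then show ?thesis using npos by (simp add: field_simps)
      qed
      have v0: "v \<noteq> 0"
      proof
        assume "v = 0"
        then show False using vx[OF i0] vb npos
          by (simp add: algebra_simps) (smt (verit) mult_pos_pos)
      qed
      define w where "w = (norm v)\<^sup>2"
      have wpos: "w > 0" using v0 unfolding w_def by simp
      define t where "t = d / w"
      have tpos: "t > 0" using dpos wpos unfolding t_def by simp
      define s where "s = C + t *\<^sub>R v"
      have sC: "s - C = t *\<^sub>R v" unfolding s_def by simp
      have nsC: "(norm (s - C))\<^sup>2 = t^2 * w"
        unfolding sC w_def by (simp add: power_mult_distrib)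
      have each: "(norm (s - x j))\<^sup>2 < t^2 * w + r2 + 2 * t * (inner v C - (n + 1) * b + inner v S)"
        if "j \<in> J" for j
      proof -
        have "(norm (s - x j))\<^sup>2 = t^2 * w + 2 * t * (inner v C - inner v (x j)) + r2"
          using sq_expand[of s "x j" C] r2[OF that] nsC unfolding sC
          by (simp add: inner_diff_right algebra_simps)
        then show ?thesis using vx[OF that] tpos
          by (smt (verit) mult_strict_left_mono)
      qed
      have maxs: "max_sqdist x J s < t^2 * w + r2 + 2 * t * (inner v C - (n + 1) * b + inner v S)"
        unfolding max_sqdist_def using fin ne each by (simp add: Max_less_iff)
      have sums: "(\<Sum>i\<in>J. (norm (s - x i))\<^sup>2) = n * t^2 * w + 2 * t * (n * inner v C - inner v S) + n * r2"
        unfolding sum_exp nsC sC by (simp add: inner_diff_right algebra_simps w_def)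
      have "qpower x J s < (n + 1) * (t^2 * w - 2 * t * d) + (n + 1) * r2"
        using maxs sums unfolding qpower_def d_def by (simp add: algebra_simps)
      also have "t^2 * w - 2 * t * d = - (d^2 / w)"
        unfolding t_def using wpos by (simp add: field_simps power2_eq_square)
      also have "(n + 1) * (- (d^2 / w)) + (n + 1) * r2 \<le> (n + 1) * r2"
        using npos wpos by simp
      finally have "qpower x J s < qpower x J C" using PC by simp
      then show False using qm unfolding is_qmin_power_centre_def by (meson not_le)
    qed
  next
    assume "C \<in> convex hull (Mpt x J ` J)"
    then obtain u where u0: "\<forall>m\<in>Mpt x J ` J. 0 \<le> u m"
      and u1: "sum u (Mpt x J ` J) = 1"
      and uC: "(\<Sum>m\<in>Mpt x J ` J. u m *\<^sub>R m) = C"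
      using convex_hull_finite[of "Mpt x J ` J"] fin by auto
    have injM: "inj_on (Mpt x J) J"
    proof (rule inj_onI)
      fix a c assume "a \<in> J" "c \<in> J" "Mpt x J a = Mpt x J c"
      then have "x a + S = x c + S" unfolding Mdef using npos by simp
      then show "a = c" using assms(3) \<open>a \<in> J\<close> \<open>c \<in> J\<close> by (simp add: inj_on_eq_iff)
    qed
    define l where "l j = u (Mpt x J j)" for j
    have l0: "l j \<ge> 0" if "j \<in> J" for j using u0 that unfolding l_def by auto
    have l1: "(\<Sum>j\<in>J. l j) = 1" using u1 unfolding l_def sum.reindex[OF injM] by (simp add: comp_def)
    have lC: "(\<Sum>j\<in>J. l j *\<^sub>R Mpt x J j) = C"
      using uC unfolding l_def sum.reindex[OF injM] by (simp add: comp_def)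
    define L where "L = (\<Sum>j\<in>J. l j *\<^sub>R x j)"
    have C1: "(n + 1) *\<^sub>R C = L + S"
    proof -
      have "C = (\<Sum>j\<in>J. (1 / (n + 1)) *\<^sub>R (l j *\<^sub>R x j + l j *\<^sub>R S))"
        unfolding lC[symmetric] Mdef by (intro sum.cong) (auto simp: scaleR_add_right)
      also have "\<dots> = (1 / (n + 1)) *\<^sub>R (L + S)"
        unfolding L_def by (simp add: scaleR_sum_right[symmetric] sum.distrib scaleR_sum_left[symmetric] l1)
      finally show ?thesis using npos by simp
    qed
    show "is_qmin_power_centre x J C"
      unfolding is_qmin_power_centre_def
    proof
      fix s
      have "(\<Sum>j\<in>J. l j * (norm (s - x j))\<^sup>2) \<le> (\<Sum>j\<in>J. l j * max_sqdist x J s)"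
        unfolding max_sqdist_def
        by (intro sum_mono mult_left_mono) (use fin l0 in auto)
      also have "\<dots> = max_sqdist x J s" using l1 by (simp add: sum_distrib_right[symmetric])
      finally have mx: "(\<Sum>j\<in>J. l j * (norm (s - x j))\<^sup>2) \<le> max_sqdist x J s" .
      have "(\<Sum>j\<in>J. l j * (norm (s - x j))\<^sup>2)
          = (\<Sum>j\<in>J. l j * ((norm (s - C))\<^sup>2 + r2) + 2 * inner (s - C) (l j *\<^sub>R (C - x j)))"
      proof (rule sum.cong)
        fix j assume j: "j \<in> J"
        have e: "(norm (s - x j))\<^sup>2 = (norm (s - C))\<^sup>2 + 2 * inner (s - C) (C - x j) + r2"
          using sq_expand[of s "x j" C] r2[OF j] by simp
        show "l j * (norm (s - x j))\<^sup>2 = l j * ((norm (s - C))\<^sup>2 + r2) + 2 * inner (s - C) (l j *\<^sub>R (C - x j))"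
          unfolding e by (simp add: algebra_simps)
      qed simp
      also have "\<dots> = (norm (s - C))\<^sup>2 + r2 + 2 * inner (s - C) (C - L)"
        unfolding L_def
        by (simp add: sum.distrib sum_distrib_left[symmetric] sum_distrib_right[symmetric] l1
            inner_sum_right[symmetric] scaleR_diff_right sum_subtractf scaleR_sum_left[symmetric])
      finally have lx: "(\<Sum>j\<in>J. l j * (norm (s - x j))\<^sup>2) = (norm (s - C))\<^sup>2 + r2 + 2 * inner (s - C) (C - L)" .
      have zero: "(n *\<^sub>R C - S) + (C - L) = 0"
        using C1 by (simp add: algebra_simps)
      have "inner (s - C) (n *\<^sub>R C - S) + inner (s - C) (C - L) = 0"
        using zero by (metis inner_add_right inner_zero_right)
      then have "qpower x J s \<ge> (n + 1) * (norm (s - C))\<^sup>2 + (n + 1) * r2"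
        using mx lx sum_exp[of s] unfolding qpower_def by (simp add: algebra_simps)
      moreover have "(n + 1) * (norm (s - C))\<^sup>2 \<ge> 0" using npos by simp
      ultimately show "qpower x J C \<le> qpower x J s" using PC by linarith
    qed
  qed
qed

end
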